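(* Let $G,H$ be finite groups and $f:G\to H$ an identity preserving function. Suppose $A\le H$ is an abelian subgroup with $[G,G;f]\le A$, $K\le\mathrm{Stab}_G(f)$ is a subgroup with $\gcd([G:K],|A|)=1$, $m$ is an integer with $m\,[G:K]\equiv 1\pmod{|A|}$, and $a_1,\dots,a_n$ are representatives of the right cosets of $K$ in $G$ ($G=\bigsqcup_i Ka_i$). Then the function $$x\mapsto f(x)\Bigl(\prod_{i=1}^n[a_i,x;f]\Bigr)^m$$ does not depend on the choice of $A$, $K$, $m$ or the coset representatives (subject to the stated conditions); in particular it coincides with the function obtained by taking $K=\mathrm{Stab}_G(f)$ and $A=[G,G;f]$. This function is called the distributed average $\overline{\overline f}$ of $f$.
   Context: For $f:G\to H$ and $a\in G$, $f^a(x)=f(a)^{-1}f(ax)$; $f$ is identity preserving if $f(1)=1$. $\mathrm{Stab}_G(f)=\{a\in G: f^a=f\}$, which is a subgroup when $f$ is identity preserving. The $f$-distributor is $[x,y;f]=f(y)^{-1}f(x)^{-1}f(xy)$, and $[G,G;f]=\langle [x,y;f]: x,y\in G\rangle$. *)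

theory Defs
  imports "HOL-Algebra.Algebra" "HOL-Number_Theory.Cong"
begin

definition fshift :: "('a,'c) monoid_scheme \<Rightarrow> ('b,'d) monoid_scheme \<Rightarrow> ('a \<Rightarrow> 'b) \<Rightarrow> 'a \<Rightarrow> 'a \<Rightarrow> 'b" where
  "fshift G H f a x = inv\<^bsub>H\<^esub> (f a) \<otimes>\<^bsub>H\<^esub> f (a \<otimes>\<^bsub>G\<^esub> x)"

definition Stab :: "('a,'c) monoid_scheme \<Rightarrow> ('b,'d) monoid_scheme \<Rightarrow> ('a \<Rightarrow> 'b) \<Rightarrow> 'a set" where
  "Stab G H f = {a \<in> carrier G. \<forall>x \<in> carrier G. fshift G H f a x = f x}"

definition distributor :: "('a,'c) monoid_scheme \<Rightarrow> ('b,'d) monoid_scheme \<Rightarrow> ('a \<Rightarrow> 'b) \<Rightarrow> 'a \<Rightarrow> 'a \<Rightarrow> 'b" where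
  "distributor G H f x y = inv\<^bsub>H\<^esub> (f y) \<otimes>\<^bsub>H\<^esub> inv\<^bsub>H\<^esub> (f x) \<otimes>\<^bsub>H\<^esub> f (x \<otimes>\<^bsub>G\<^esub> y)"

definition distr_subgroup :: "('a,'c) monoid_scheme \<Rightarrow> ('b,'d) monoid_scheme \<Rightarrow> ('a \<Rightarrow> 'b) \<Rightarrow> 'b set" where
  "distr_subgroup G H f =
     generate H {distributor G H f x y | x y. x \<in> carrier G \<and> y \<in> carrier G}"

definition dist_admissible ::
  "('a,'c) monoid_scheme \<Rightarrow> ('b,'d) monoid_scheme \<Rightarrow> ('a \<Rightarrow> 'b) \<Rightarrow> 'b set \<Rightarrow> 'a set \<Rightarrow> int \<Rightarrow> 'a set \<Rightarrow> bool" where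
  "dist_admissible G H f A K m R \<longleftrightarrow>
     subgroup A H \<and> (\<forall>a \<in> A. \<forall>b \<in> A. a \<otimes>\<^bsub>H\<^esub> b = b \<otimes>\<^bsub>H\<^esub> a) \<and>
     distr_subgroup G H f \<subseteq> A \<and>
     subgroup K G \<and> K \<subseteq> Stab G H f \<and>
     coprime (card (rcosets\<^bsub>G\<^esub> K)) (card A) \<and>
     [m * int (card (rcosets\<^bsub>G\<^esub> K)) = 1] (mod int (card A)) \<and>
     R \<subseteq> carrier G \<and> bij_betw (\<lambda>r. K #>\<^bsub>G\<^esub> r) R (rcosets\<^bsub>G\<^esub> K)"

definition dist_avg_with ::
  "('a,'c) monoid_scheme \<Rightarrow> ('b,'d) monoid_scheme \<Rightarrow> ('a \<Rightarrow> 'b) \<Rightarrow> 'b set \<Rightarrow> int \<Rightarrow> 'a set \<Rightarrow> 'a \<Rightarrow> 'b" where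
  "dist_avg_with G H f A m R x =
     f x \<otimes>\<^bsub>H\<^esub> (finprod (H\<lparr>carrier := A\<rparr>) (\<lambda>r. distributor G H f r x) R) [^]\<^bsub>H\<^esub> m"

end

theory Submission
  imports Defs
begin

lemma abelian_sub_comm:
  assumes "group H" "subgroup A H" "\<forall>a\<in>A. \<forall>b\<in>A. a \<otimes>\<^bsub>H\<^esub> b = b \<otimes>\<^bsub>H\<^esub> a"
  shows "comm_group (H\<lparr>carrier := A\<rparr>)"
  by (rule group.group_comm_groupI[OF subgroup.subgroup_is_group[OF assms(2,1)]]) (use assms(3) in auto)

lemma finprod_sub:
  assumes H: "group H" and A: "subgroup A H" and ab: "\<forall>a\<in>A. \<forall>b\<in>A. a \<otimes>\<^bsub>H\<^esub> b = b \<otimes>\<^bsub>H\<^esub> a"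
    and D: "subgroup D H" "D \<subseteq> A" and fin: "finite R" and g: "g \<in> R \<rightarrow> D"
  shows "finprod (H\<lparr>carrier := A\<rparr>) g R = finprod (H\<lparr>carrier := D\<rparr>) g R"
proof -
  interpret CA: comm_group "H\<lparr>carrier := A\<rparr>" using abelian_sub_comm[OF H A ab] .
  interpret CD: comm_group "H\<lparr>carrier := D\<rparr>" using abelian_sub_comm[OF H D(1)] ab D(2) by blast
  show ?thesis using fin g
  proof (induction R rule: finite_induct)
    case empty then show ?case by simp
  next
    case (insert a F)
    have gA: "g \<in> insert a F \<rightarrow> A" using insert.prems D(2) by blast
    have "finprod (H\<lparr>carrier := A\<rparr>) g (insert a F) = g a \<otimes>\<^bsub>H\<^esub> finprod (H\<lparr>carrier := A\<rparr>) g F"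
      using CA.finprod_insert[OF insert.hyps(1,2)] gA by auto
    moreover have "finprod (H\<lparr>carrier := D\<rparr>) g (insert a F) = g a \<otimes>\<^bsub>H\<^esub> finprod (H\<lparr>carrier := D\<rparr>) g F"
      using CD.finprod_insert[OF insert.hyps(1,2)] insert.prems by auto
    ultimately show ?case using insert by auto
  qed
qed

lemma (in comm_group) finprod_pow_nat:
  assumes "g \<in> I \<rightarrow> carrier G"
  shows "finprod G (\<lambda>i. g i [^] (n::nat)) I = (finprod G g I) [^] n"
proof (induction n)
  case 0 then show ?case by simp
next
  case (Suc n)
  have "finprod G (\<lambda>i. g i [^] Suc n) I = finprod G (\<lambda>i. g i [^] n \<otimes> g i) I" by simp
  also have "\<dots> = finprod G (\<lambda>i. g i [^] n) I \<otimes> finprod G g I"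
    by (rule finprod_multf) (use assms in auto)
  finally show ?case using Suc by simp
qed

locale dist = G: group G + H: group H for G (structure) and H and f +
  assumes finG: "finite (carrier G)" and finH: "finite (carrier H)"
    and fpi: "f \<in> carrier G \<rightarrow> carrier H" and f1: "f \<one> = \<one>\<^bsub>H\<^esub>"
begin

lemma fc[simp]: "x \<in> carrier G \<Longrightarrow> f x \<in> carrier H" using fpi by blast

lemma stab_iff: "a \<in> Stab G H f \<longleftrightarrow> a \<in> carrier G \<and> (\<forall>x\<in>carrier G. f (a \<otimes> x) = f a \<otimes>\<^bsub>H\<^esub> f x)"
proof -
  have "\<And>x. a \<in> carrier G \<Longrightarrow> x \<in> carrier G \<Longrightarrow>
     (inv\<^bsub>H\<^esub> (f a) \<otimes>\<^bsub>H\<^esub> f (a \<otimes> x) = f x) \<longleftrightarrow> (f (a \<otimes> x) = f a \<otimes>\<^bsub>H\<^esub> f x)"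
    by (metis G.m_closed H.inv_solve_left fc)
  then show ?thesis unfolding Stab_def fshift_def by auto
qed

lemma stab_mult: "a \<in> Stab G H f \<Longrightarrow> x \<in> carrier G \<Longrightarrow> f (a \<otimes> x) = f a \<otimes>\<^bsub>H\<^esub> f x"
  using stab_iff by blast

lemma stab_sub: "Stab G H f \<subseteq> carrier G" using stab_iff by blast

lemma S_subgroup: "subgroup (Stab G H f) G"
proof
  show "Stab G H f \<subseteq> carrier G" by (rule stab_sub)
  show "\<one> \<in> Stab G H f" using f1 by (auto simp: stab_iff)
next
  fix a b assume a: "a \<in> Stab G H f" and b: "b \<in> Stab G H f"
  have ac: "a \<in> carrier G" and bc: "b \<in> carrier G" using a b stab_iff by auto
  have fab: "f (a \<otimes> b) = f a \<otimes>\<^bsub>H\<^esub> f b" using stab_mult[OF a bc] .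
  show "a \<otimes> b \<in> Stab G H f"
    unfolding stab_iff
    using ac bc fab stab_mult[OF a] stab_mult[OF b] by (auto simp: G.m_assoc H.m_assoc)
next
  fix a assume a: "a \<in> Stab G H f"
  have ac: "a \<in> carrier G" using a stab_iff by auto
  have key: "f (inv a \<otimes> x) = inv\<^bsub>H\<^esub> (f a) \<otimes>\<^bsub>H\<^esub> f x" if x: "x \<in> carrier G" for x
  proof -
    have "f x = f a \<otimes>\<^bsub>H\<^esub> f (inv a \<otimes> x)"
      using stab_mult[OF a, of "inv a \<otimes> x"] ac x by (simp add: G.m_assoc[symmetric])
    then show ?thesis using ac x by (simp add: H.inv_solve_left)
  qed
  have finv: "f (inv a) = inv\<^bsub>H\<^esub> (f a)" using key[of \<one>] ac f1 by simp
  show "inv a \<in> Stab G H f" unfolding stab_iff using key finv ac by auto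
qed

abbreviation "d \<equiv> distributor G H f"
abbreviation "D \<equiv> distr_subgroup G H f"
abbreviation "S \<equiv> Stab G H f"

lemma d_c[simp]: "r \<in> carrier G \<Longrightarrow> x \<in> carrier G \<Longrightarrow> d r x \<in> carrier H"
  unfolding distributor_def by simp

lemma D_subgroup: "subgroup D H"
  unfolding distr_subgroup_def by (rule H.generate_is_subgroup) auto

lemma d_D: "r \<in> carrier G \<Longrightarrow> x \<in> carrier G \<Longrightarrow> d r x \<in> D"
  unfolding distr_subgroup_def by (rule generate.incl) blast

lemma d_S: assumes s: "s \<in> S" and r: "r \<in> carrier G" and x: "x \<in> carrier G"
  shows "d (s \<otimes> r) x = d r x"
proof -
  have sc: "s \<in> carrier G" using s stab_iff by auto
  have "d (s \<otimes> r) x = inv\<^bsub>H\<^esub> (f x) \<otimes>\<^bsub>H\<^esub> inv\<^bsub>H\<^esub> (f s \<otimes>\<^bsub>H\<^esub> f r) \<otimes>\<^bsub>H\<^esub> (f s \<otimes>\<^bsub>H\<^esub> f (r \<otimes> x))"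
    unfolding distributor_def using stab_mult[OF s] sc r x by (simp add: G.m_assoc)
  also have "\<dots> = d r x" unfolding distributor_def using sc r x
    by (simp add: H.inv_mult_group H.m_assoc[symmetric])
       (simp add: H.m_assoc)
  finally show ?thesis .
qed


lemma S_rcos_sub: assumes "subgroup K G" "K \<subseteq> S" "r \<in> carrier G" shows "K #> r \<subseteq> S #> r"
  using assms unfolding r_coset_def by auto

lemma card_slice:
  assumes K: "subgroup K G" "K \<subseteq> S" and R: "R \<subseteq> carrier G" "bij_betw (\<lambda>r. K #> r) R (rcosets K)"
    and r0: "r0 \<in> carrier G"
  shows "card (R \<inter> (S #> r0)) * card K = card S"
proof -
  have Ssub: "subgroup S G" by (rule S_subgroup)
  have eq: "S #> r0 = (\<Union>r\<in>R \<inter> (S #> r0). K #> r)"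
  proof
    show "(\<Union>r\<in>R \<inter> (S #> r0). K #> r) \<subseteq> S #> r0"
    proof (clarify)
      fix r g assume "r \<in> R" "r \<in> S #> r0" "g \<in> K #> r"
      then have "S #> r = S #> r0" using G.repr_independence[OF _ r0 Ssub] by auto
      then show "g \<in> S #> r0" using S_rcos_sub[OF K] \<open>r \<in> R\<close> R(1) \<open>g \<in> K #> r\<close> by blast
    qed
  next
    show "S #> r0 \<subseteq> (\<Union>r\<in>R \<inter> (S #> r0). K #> r)"
    proof
      fix g assume g: "g \<in> S #> r0"
      have gc: "g \<in> carrier G" using g r0 stab_sub G.r_coset_subset_G by blast
      have "K #> g \<in> rcosets K" using G.rcosetsI[OF subgroup.subset[OF K(1)] gc] .
      then obtain r where r: "r \<in> R" "K #> r = K #> g" using R(2) unfolding bij_betw_def by (metis imageE)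
      have rc: "r \<in> carrier G" using r R(1) by auto
      have "g \<in> K #> r" using r(2) G.rcos_self[OF gc K(1)] by simp
      have "r \<in> K #> g" using G.repr_independenceD[OF K(1) rc r(2)[symmetric]] .
      then have "r \<in> S #> g" using S_rcos_sub[OF K gc] by blast
      moreover have "S #> r0 = S #> g" using G.repr_independence[OF g r0 Ssub] .
      ultimately show "g \<in> (\<Union>r\<in>R \<inter> (S #> r0). K #> r)" using \<open>g \<in> K #> r\<close> r(1) by auto
    qed
  qed
  have finR: "finite R" using R(1) finG finite_subset by blast
  have "card (S #> r0) = card S"
    using G.card_rcosets_equal[OF G.rcosetsI[OF stab_sub r0] stab_sub] by simp
  also have "card (S #> r0) = card (\<Union>r\<in>R \<inter> (S #> r0). K #> r)"
    using eq by (rule arg_cong)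
  also have "\<dots> = (\<Sum>r\<in>R \<inter> (S #> r0). card (K #> r))"
  proof (rule card_UN_disjoint)
    show "finite (R \<inter> (S #> r0))" using finR by simp
    show "\<forall>i\<in>R \<inter> (S #> r0). finite (K #> i)"
      using R(1) finG G.r_coset_subset_G[OF subgroup.subset[OF K(1)]] finite_subset by blast
    show "\<forall>i\<in>R \<inter> (S #> r0). \<forall>j\<in>R \<inter> (S #> r0). i \<noteq> j \<longrightarrow> (K #> i) \<inter> (K #> j) = {}"
    proof (intro ballI impI)
      fix i j assume "i \<in> R \<inter> (S #> r0)" "j \<in> R \<inter> (S #> r0)" "i \<noteq> j"
      then have ne: "K #> i \<noteq> K #> j" using R(2) unfolding bij_betw_def inj_on_def by auto
      have "K #> i \<in> rcosets K" "K #> j \<in> rcosets K" using \<open>i \<in> R \<inter> _\<close> \<open>j \<in> R \<inter> _\<close> R(2)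
        unfolding bij_betw_def by auto
      then show "(K #> i) \<inter> (K #> j) = {}" using G.rcos_disjoint[OF K(1)] ne
        unfolding pairwise_def disjnt_def by blast
    qed
  qed
  also have "\<dots> = (\<Sum>r\<in>R \<inter> (S #> r0). card K)"
    apply (rule sum.cong[OF refl])
    using G.card_rcosets_equal[OF G.rcosetsI[OF subgroup.subset[OF K(1)]] subgroup.subset[OF K(1)]] R(1)
    by auto
  finally show ?thesis by simp
qed

lemma d_const: assumes r0: "r0 \<in> carrier G" and r: "r \<in> S #> r0" and x: "x \<in> carrier G"
  shows "d r x = d r0 x"
proof -
  obtain s where "s \<in> S" "r = s \<otimes> r0" using r unfolding r_coset_def by auto
  then show ?thesis using d_S r0 x by simp
qed

lemma prod_reduce:
  assumes CD: "comm_group (H\<lparr>carrier := D\<rparr>)"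
    and K: "subgroup K G" "K \<subseteq> S" and R: "R \<subseteq> carrier G" "bij_betw (\<lambda>r. K #> r) R (rcosets K)"
    and R0: "R0 \<subseteq> carrier G" "bij_betw (\<lambda>r. S #> r) R0 (rcosets S)"
    and x: "x \<in> carrier G"
  shows "finprod (H\<lparr>carrier := D\<rparr>) (\<lambda>r. d r x) R
       = (finprod (H\<lparr>carrier := D\<rparr>) (\<lambda>r. d r x) R0) [^]\<^bsub>H\<lparr>carrier := D\<rparr>\<^esub> (card S div card K)"
proof -
  interpret C: comm_group "H\<lparr>carrier := D\<rparr>" by (rule CD)
  have Ssub: "subgroup S G" by (rule S_subgroup)
  have finR: "finite R" using R(1) finG finite_subset by blast
  have finR0: "finite R0" using R0(1) finG finite_subset by blast
  have Req: "R = (\<Union>r0\<in>R0. R \<inter> (S #> r0))"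
  proof
    show "R \<subseteq> (\<Union>r0\<in>R0. R \<inter> (S #> r0))"
    proof
      fix r assume r: "r \<in> R"
      have rc: "r \<in> carrier G" using r R(1) by auto
      have "S #> r \<in> rcosets S" using G.rcosetsI[OF stab_sub rc] .
      then obtain r0 where r0: "r0 \<in> R0" "S #> r0 = S #> r" using R0(2) unfolding bij_betw_def by (metis imageE)
      have "r \<in> S #> r0" using r0(2) G.rcos_self[OF rc Ssub] by simp
      then show "r \<in> (\<Union>r0\<in>R0. R \<inter> (S #> r0))" using r r0(1) by auto
    qed
  qed auto
  have cK: "card K > 0"
    using subgroup.one_closed[OF K(1)] finite_subset[OF subgroup.subset[OF K(1)] finG]
    by (auto simp: card_gt_0_iff)
  have slice: "finprod (H\<lparr>carrier := D\<rparr>) (\<lambda>r. d r x) (R \<inter> (S #> r0))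
      = d r0 x [^]\<^bsub>H\<lparr>carrier := D\<rparr>\<^esub> (card S div card K)" if r0: "r0 \<in> R0" for r0
  proof -
    have r0c: "r0 \<in> carrier G" using r0 R0(1) by auto
    have "finprod (H\<lparr>carrier := D\<rparr>) (\<lambda>r. d r x) (R \<inter> (S #> r0))
        = finprod (H\<lparr>carrier := D\<rparr>) (\<lambda>r. d r0 x) (R \<inter> (S #> r0))"
      by (rule C.finprod_cong') (use d_const[OF r0c _ x] d_D[OF r0c x] in auto)
    also have "\<dots> = d r0 x [^]\<^bsub>H\<lparr>carrier := D\<rparr>\<^esub> card (R \<inter> (S #> r0))"
      by (rule C.finprod_const) (use d_D[OF r0c x] in simp)
    also have "card (R \<inter> (S #> r0)) = card S div card K"
      using card_slice[OF K R r0c] cK by (metis nonzero_mult_div_cancel_right not_gr0)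
    finally show ?thesis .
  qed
  have "finprod (H\<lparr>carrier := D\<rparr>) (\<lambda>r. d r x) R
      = finprod (H\<lparr>carrier := D\<rparr>) (\<lambda>r0. finprod (H\<lparr>carrier := D\<rparr>) (\<lambda>r. d r x) (R \<inter> (S #> r0))) R0"
    apply (subst Req)
  proof (rule C.finprod_UN_disjoint)
    show "finite R0" by (rule finR0)
    show "\<And>i. i \<in> R0 \<Longrightarrow> finite (R \<inter> (S #> i))" using finR by simp
    show "\<And>i y. i \<in> R0 \<Longrightarrow> y \<in> R \<inter> (S #> i) \<Longrightarrow> d y x \<in> carrier (H\<lparr>carrier := D\<rparr>)"
      using d_D R(1) x by auto
    show "pairwise (\<lambda>i j. disjnt (R \<inter> (S #> i)) (R \<inter> (S #> j))) R0"
      unfolding pairwise_def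
    proof (intro ballI impI)
      fix i j assume ij: "i \<in> R0" "j \<in> R0" "i \<noteq> j"
      then have ne: "S #> i \<noteq> S #> j" using R0(2) unfolding bij_betw_def inj_on_def by auto
      have "S #> i \<in> rcosets S" "S #> j \<in> rcosets S" using ij R0(2)
        unfolding bij_betw_def by auto
      then have "disjnt (S #> i) (S #> j)" using G.rcos_disjoint[OF Ssub] ne
        unfolding pairwise_def by blast
      then show "disjnt (R \<inter> (S #> i)) (R \<inter> (S #> j))" unfolding disjnt_def by blast
    qed
  qed
  also have "\<dots> = finprod (H\<lparr>carrier := D\<rparr>) (\<lambda>r0. d r0 x [^]\<^bsub>H\<lparr>carrier := D\<rparr>\<^esub> (card S div card K)) R0"
    proof (rule C.finprod_cong')
    show "(\<lambda>r0. d r0 x [^]\<^bsub>H\<lparr>carrier := D\<rparr>\<^esub> (card S div card K)) \<in> R0 \<rightarrow> carrier (H\<lparr>carrier := D\<rparr>)"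
    proof
      fix r0 assume "r0 \<in> R0"
      then have "d r0 x \<in> carrier (H\<lparr>carrier := D\<rparr>)" using d_D R0(1) x by auto
      then show "d r0 x [^]\<^bsub>H\<lparr>carrier := D\<rparr>\<^esub> (card S div card K) \<in> carrier (H\<lparr>carrier := D\<rparr>)"
        by (rule C.nat_pow_closed)
    qed
  qed (use slice in auto)
  also have "\<dots> = (finprod (H\<lparr>carrier := D\<rparr>) (\<lambda>r. d r x) R0) [^]\<^bsub>H\<lparr>carrier := D\<rparr>\<^esub> (card S div card K)"
    by (rule C.finprod_pow_nat) (use d_D R0(1) x in auto)
  finally show ?thesis .
qed

lemma reps_exist:
  assumes "subgroup K G"
  shows "\<exists>R0. R0 \<subseteq> carrier G \<and> bij_betw (\<lambda>r. K #> r) R0 (rcosets K)"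
proof -
  define rep where "rep c = (SOME r. r \<in> c)" for c :: "'a set"
  have rep: "rep c \<in> c" "K #> rep c = c" if c: "c \<in> rcosets K" for c
  proof -
    obtain a where a: "a \<in> carrier G" "c = K #> a" using c unfolding RCOSETS_def by auto
    have "a \<in> c" using a G.rcos_self[OF a(1) assms] by simp
    then show r: "rep c \<in> c" unfolding rep_def by (rule someI)
    show "K #> rep c = c" using G.repr_independence[OF _ a(1) assms] r a(2) by simp
  qed
  have sub: "rep c \<in> carrier G" if c: "c \<in> rcosets K" for c
  proof -
    obtain a where a: "a \<in> carrier G" "c = K #> a" using c unfolding RCOSETS_def by auto
    then have "c \<subseteq> carrier G" using G.r_coset_subset_G[OF subgroup.subset[OF assms]] by simp
    then show ?thesis using rep(1)[OF c] by blast
  qed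
  have "bij_betw (\<lambda>r. K #> r) (rep ` (rcosets K)) (rcosets K)"
    unfolding bij_betw_def
  proof
    show "inj_on ((#>) K) (rep ` (rcosets K))"
      unfolding inj_on_def using rep(2) by auto
    show "(#>) K ` rep ` (rcosets K) = rcosets K"
      using rep(2) by (auto simp: image_image)
  qed
  then show ?thesis using sub by blast
qed

lemma pow_cong:
  assumes D: "subgroup D H" and fin: "finite D" and P: "P \<in> D" and e: "[e1 = e2] (mod int (card D))"
  shows "P [^]\<^bsub>H\<^esub> e1 = P [^]\<^bsub>H\<^esub> e2"
proof -
  interpret C: group "H\<lparr>carrier := D\<rparr>" using subgroup.subgroup_is_group[OF D H.is_group] .
  have Pc: "P \<in> carrier H" using P subgroup.subset[OF D] by auto
  have "P [^]\<^bsub>H\<lparr>carrier := D\<rparr>\<^esub> order (H\<lparr>carrier := D\<rparr>) = \<one>\<^bsub>H\<lparr>carrier := D\<rparr>\<^esub>"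
    by (rule C.pow_order_eq_1) (use P in simp)
  then have one: "P [^]\<^bsub>H\<^esub> card D = \<one>\<^bsub>H\<^esub>"
    by (simp add: order_def H.nat_pow_consistent[symmetric])
  obtain k where k: "e2 = e1 + int (card D) * k" using e cong_iff_lin by blast
  have "P [^]\<^bsub>H\<^esub> e2 = P [^]\<^bsub>H\<^esub> e1 \<otimes>\<^bsub>H\<^esub> (P [^]\<^bsub>H\<^esub> int (card D)) [^]\<^bsub>H\<^esub> k"
    using k H.int_pow_mult[OF Pc] H.int_pow_pow[OF Pc] by simp
  also have "\<dots> = P [^]\<^bsub>H\<^esub> e1" using one Pc by (simp add: int_pow_int)
  finally show ?thesis by simp
qed

lemma adm_value:
  assumes adm: "dist_admissible G H f A K m R"
    and R0: "R0 \<subseteq> carrier G" "bij_betw (\<lambda>r. S #> r) R0 (rcosets S)"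
    and m0: "[m0 * int (card (rcosets S)) = 1] (mod int (card D))"
    and x: "x \<in> carrier G"
  shows "dist_avg_with G H f A m R x
     = f x \<otimes>\<^bsub>H\<^esub> (finprod (H\<lparr>carrier := D\<rparr>) (\<lambda>r. d r x) R0) [^]\<^bsub>H\<^esub> m0"
proof -
  note adm' = adm[unfolded dist_admissible_def]
  have A: "subgroup A H" and ab: "\<forall>a\<in>A. \<forall>b\<in>A. a \<otimes>\<^bsub>H\<^esub> b = b \<otimes>\<^bsub>H\<^esub> a" and DA: "D \<subseteq> A"
    and K: "subgroup K G" "K \<subseteq> S" and cop: "coprime (card (rcosets K)) (card A)"
    and mc: "[m * int (card (rcosets K)) = 1] (mod int (card A))"
    and R: "R \<subseteq> carrier G" "bij_betw (\<lambda>r. K #> r) R (rcosets K)"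
    using adm' by auto
  have Dsub: "subgroup D H" by (rule D_subgroup)
  have CD: "comm_group (H\<lparr>carrier := D\<rparr>)" using abelian_sub_comm[OF H.is_group Dsub] ab DA by blast
  interpret C: comm_group "H\<lparr>carrier := D\<rparr>" by (rule CD)
  have finR: "finite R" using R(1) finG finite_subset by blast
  have finD: "finite D" using subgroup.subset[OF Dsub] finH finite_subset by blast
  have finA: "finite A" using subgroup.subset[OF A] finH finite_subset by blast
  define N where "N = card S div card K"
  define P0 where "P0 = finprod (H\<lparr>carrier := D\<rparr>) (\<lambda>r. d r x) R0"
  have P0D: "P0 \<in> D" unfolding P0_def using C.finprod_closed[of "\<lambda>r. d r x" R0] d_D R0(1) x by auto
  have P0c: "P0 \<in> carrier H" using P0D subgroup.subset[OF Dsub] by auto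
  have "finprod (H\<lparr>carrier := A\<rparr>) (\<lambda>r. d r x) R = finprod (H\<lparr>carrier := D\<rparr>) (\<lambda>r. d r x) R"
    by (rule finprod_sub[OF H.is_group A ab Dsub DA finR]) (use d_D R(1) x in auto)
  also have "\<dots> = P0 [^]\<^bsub>H\<lparr>carrier := D\<rparr>\<^esub> N"
    unfolding P0_def N_def by (rule prod_reduce[OF CD K R R0 x])
  also have "\<dots> = P0 [^]\<^bsub>H\<^esub> N" by (simp add: H.nat_pow_consistent[symmetric])
  finally have "dist_avg_with G H f A m R x = f x \<otimes>\<^bsub>H\<^esub> P0 [^]\<^bsub>H\<^esub> (int N * m)"
    unfolding dist_avg_with_def using H.int_pow_pow[OF P0c, of "int N" m] by (simp add: int_pow_int)
  moreover have "P0 [^]\<^bsub>H\<^esub> (int N * m) = P0 [^]\<^bsub>H\<^esub> m0"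
  proof (rule pow_cong[OF Dsub finD P0D])
    have Ssub: "subgroup S G" by (rule S_subgroup)
    have cK: "card K > 0"
      using subgroup.one_closed[OF K(1)] finite_subset[OF subgroup.subset[OF K(1)] finG]
      by (auto simp: card_gt_0_iff)
    have "card (R \<inter> (S #> \<one>)) * card K = card S" by (rule card_slice[OF K R]) simp
    then have SNK: "card S = N * card K" unfolding N_def using cK by (metis nonzero_mult_div_cancel_right not_gr0)
    have "card (rcosets K) * card K = card (rcosets S) * card S"
      using G.lagrange[OF K(1)] G.lagrange[OF Ssub] by simp
    then have nK: "card (rcosets K) = card (rcosets S) * N" using SNK cK by (simp add: mult.assoc)
    have "subgroup D (H\<lparr>carrier := A\<rparr>)" by (rule H.subgroup_incl[OF Dsub A DA])
    then have "card (rcosets\<^bsub>H\<lparr>carrier := A\<rparr>\<^esub> D) * card D = order (H\<lparr>carrier := A\<rparr>)"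
      by (rule group.lagrange[OF subgroup.subgroup_is_group[OF A H.is_group]])
    then have "card (rcosets\<^bsub>H\<lparr>carrier := A\<rparr>\<^esub> D) * card D = card A" by (simp add: order_def)
    then have DdvdA: "card D dvd card A" by (metis dvd_triv_right)
    have cop2: "coprime (card (rcosets S)) (card D)"
      by (rule coprime_divisors[OF _ DdvdA, of _ "card (rcosets K)"]) (use cop nK in auto)
    have "[m * int (card (rcosets K)) = 1] (mod int (card D))"
      by (rule cong_dvd_modulus[OF mc]) (use DdvdA in simp)
    then have "[int N * m * int (card (rcosets S)) = m0 * int (card (rcosets S))] (mod int (card D))"
    proof -
      have "int N * m * int (card (rcosets S)) = m * int (card (rcosets K))" using nK by (simp add: ac_simps)
      then show ?thesis using \<open>[m * int (card (rcosets K)) = 1] (mod int (card D))\<close> m0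
        by (metis cong_sym cong_trans)
    qed
    then show "[int N * m = m0] (mod int (card D))"
      using cong_mult_rcancel[of "int (card (rcosets S))" "int (card D)" "int N * m" m0] cop2 by simp
  qed
  ultimately show ?thesis unfolding P0_def by simp
qed

lemma adm_facts:
  assumes adm: "dist_admissible G H f A K m R"
  shows "coprime (card (rcosets S)) (card D)" "\<forall>a\<in>D. \<forall>b\<in>D. a \<otimes>\<^bsub>H\<^esub> b = b \<otimes>\<^bsub>H\<^esub> a"
proof -
  note adm' = adm[unfolded dist_admissible_def]
  have A: "subgroup A H" and ab: "\<forall>a\<in>A. \<forall>b\<in>A. a \<otimes>\<^bsub>H\<^esub> b = b \<otimes>\<^bsub>H\<^esub> a" and DA: "D \<subseteq> A"
    and K: "subgroup K G" "K \<subseteq> S" and cop: "coprime (card (rcosets K)) (card A)"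
    and R: "R \<subseteq> carrier G" "bij_betw (\<lambda>r. K #> r) R (rcosets K)"
    using adm' by auto
  show "\<forall>a\<in>D. \<forall>b\<in>D. a \<otimes>\<^bsub>H\<^esub> b = b \<otimes>\<^bsub>H\<^esub> a" using ab DA by blast
  have Dsub: "subgroup D H" by (rule D_subgroup)
  define N where "N = card S div card K"
  have Ssub: "subgroup S G" by (rule S_subgroup)
  have cK: "card K > 0"
    using subgroup.one_closed[OF K(1)] finite_subset[OF subgroup.subset[OF K(1)] finG]
    by (auto simp: card_gt_0_iff)
  have "card (R \<inter> (S #> \<one>)) * card K = card S" by (rule card_slice[OF K R]) simp
  then have SNK: "card S = N * card K" unfolding N_def using cK by (metis nonzero_mult_div_cancel_right not_gr0)
  have "card (rcosets K) * card K = card (rcosets S) * card S"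
    using G.lagrange[OF K(1)] G.lagrange[OF Ssub] by simp
  then have nK: "card (rcosets K) = card (rcosets S) * N" using SNK cK by (simp add: mult.assoc)
  have "subgroup D (H\<lparr>carrier := A\<rparr>)" by (rule H.subgroup_incl[OF Dsub A DA])
  then have "card (rcosets\<^bsub>H\<lparr>carrier := A\<rparr>\<^esub> D) * card D = order (H\<lparr>carrier := A\<rparr>)"
    by (rule group.lagrange[OF subgroup.subgroup_is_group[OF A H.is_group]])
  then have "card (rcosets\<^bsub>H\<lparr>carrier := A\<rparr>\<^esub> D) * card D = card A" by (simp add: order_def)
  then have DdvdA: "card D dvd card A" by (metis dvd_triv_right)
  show "coprime (card (rcosets S)) (card D)"
    by (rule coprime_divisors[OF _ DdvdA, of _ "card (rcosets K)"]) (use cop nK in auto)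
qed

end

theorem mainTheorem11:
  fixes G :: "('a,'c) monoid_scheme" and H :: "('b,'d) monoid_scheme" and f :: "'a \<Rightarrow> 'b"
  assumes "group G" and "group H"
    and "finite (carrier G)" and "finite (carrier H)"
    and "f \<in> carrier G \<rightarrow> carrier H"
    and "f \<one>\<^bsub>G\<^esub> = \<one>\<^bsub>H\<^esub>"
    and "dist_admissible G H f A K m R"
  shows "(\<forall>A' K' m' R'. dist_admissible G H f A' K' m' R' \<longrightarrow>
            (\<forall>x \<in> carrier G. dist_avg_with G H f A' m' R' x = dist_avg_with G H f A m R x))
       \<and> (\<exists>m0 R0. dist_admissible G H f (distr_subgroup G H f) (Stab G H f) m0 R0 \<and>
            (\<forall>x \<in> carrier G. dist_avg_with G H f (distr_subgroup G H f) m0 R0 x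
                              = dist_avg_with G H f A m R x))"
proof -
  interpret dist G H f using assms(1-6) by (simp add: dist_def dist_axioms_def)
  obtain R0 where R0: "R0 \<subseteq> carrier G" "bij_betw (\<lambda>r. S #>\<^bsub>G\<^esub> r) R0 (rcosets\<^bsub>G\<^esub> S)"
    using reps_exist[OF S_subgroup] by blast
  have cop: "coprime (card (rcosets\<^bsub>G\<^esub> S)) (card D)" and ab: "\<forall>a\<in>D. \<forall>b\<in>D. a \<otimes>\<^bsub>H\<^esub> b = b \<otimes>\<^bsub>H\<^esub> a"
    using adm_facts[OF assms(7)] by auto
  obtain m0 where m0': "[int (card (rcosets\<^bsub>G\<^esub> S)) * m0 = 1] (mod int (card D))"
    using cong_solve_coprime_int[of "int (card (rcosets\<^bsub>G\<^esub> S))" "int (card D)"] cop by auto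
  have m0: "[m0 * int (card (rcosets\<^bsub>G\<^esub> S)) = 1] (mod int (card D))" using m0' by (simp add: mult.commute)
  have canon: "dist_admissible G H f D S m0 R0"
    unfolding dist_admissible_def using D_subgroup ab S_subgroup cop m0 R0 by auto
  have val: "dist_avg_with G H f A' m' R' x
     = f x \<otimes>\<^bsub>H\<^esub> (finprod (H\<lparr>carrier := D\<rparr>) (\<lambda>r. d r x) R0) [^]\<^bsub>H\<^esub> m0"
    if "dist_admissible G H f A' K' m' R'" "x \<in> carrier G" for A' K' m' R' x
    by (rule adm_value[OF that(1) R0 m0 that(2)])
  show ?thesis
    using val[OF assms(7)] val canon by metis
qed

end
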